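(* For $n\ge 2$, let $\mathfrak{C}_n$ be the set of trees on the vertex set $\{1,\dots,n\}$ and define $$G_n(x,y,z)=\sum_{t\in\mathfrak{C}_n}x^{\deg_1(t)}y^{\deg'_2(t)}z^{|L_1(t)|}.$$ Then $G_n(x,y,z)=G_n(y,x,z)$ for all $n\ge 2$.
   Context: $\deg_k(t)$ is the degree of vertex $k$ in $t$. For a tree $t$ with vertices labeled by distinct integers and a vertex $i$, consider the path of vertices $v_0=i,v_1,\dots,v_\ell$ defined by: for each $m\ge 0$, if $v_m$ has a neighbor with label larger than $v_m$, then $v_{m+1}$ is the neighbor of $v_m$ with the smallest label among those neighbors with label larger than $v_m$; otherwise the path stops at $v_m$. Then $L_i(t)=\{v_1,\dots,v_\ell\}$, and $\deg'_2(t)$ denotes the degree in $t$ of the last vertex $v_\ell$ of this path started at $i=1$. Equivalently, $G_n(x,y,z)=n^{n-2}\mathbb{E}[x^{\mathbb{T}_1}y^{\mathbb{T}_2}z^{\mathbb{M}_1}]$ for a uniform minimal factorization $(\tau_1,\dots,\tau_{n-1})$ of $(1~2\dots n)$ (i.e. $\tau_{n-1}\circ\dots\circ\tau_1=(1~2\dots n)$), where $\mathbb{T}_k$ is the number of transpositions containing $k$ and $\mathbb{M}_1$ is the number of transpositions that move the trajectory of $1$. *)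

theory Defs
  imports Main
begin

text \<open>A graph on vertices of type nat is given by its edge set: a set of 2-element sets.\<close>

definition adj :: "nat set set \<Rightarrow> (nat \<times> nat) set" where
  "adj E = {(u, v). {u, v} \<in> E}"

text \<open>A tree on vertex set V: every edge is a 2-subset of V, the graph is connected,
  and it is acyclic (no edge lies on a cycle, i.e. removing any edge {u,v}
  disconnects u from v).\<close>

definition is_tree :: "nat set \<Rightarrow> nat set set \<Rightarrow> bool" where
  "is_tree V E \<longleftrightarrow>
     (\<forall>e\<in>E. e \<subseteq> V \<and> card e = 2) \<and>
     (\<forall>u\<in>V. \<forall>v\<in>V. (u, v) \<in> (adj E)\<^sup>*) \<and>
     (\<forall>e\<in>E. \<forall>u v. e = {u, v} \<longrightarrow> (u, v) \<notin> (adj (E - {e}))\<^sup>*)"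

definition trees :: "nat \<Rightarrow> nat set set set" where
  "trees n = {E. is_tree {1..n} E}"

definition deg :: "nat set set \<Rightarrow> nat \<Rightarrow> nat" where
  "deg E k = card {e \<in> E. k \<in> e}"

definition larger_nbrs :: "nat set set \<Rightarrow> nat \<Rightarrow> nat set" where
  "larger_nbrs E v = {u. {v, u} \<in> E \<and> v < u}"

definition nxt :: "nat set set \<Rightarrow> nat \<Rightarrow> nat" where
  "nxt E v = (if larger_nbrs E v = {} then v else Min (larger_nbrs E v))"

definition Lpath :: "nat set set \<Rightarrow> nat \<Rightarrow> nat set" where
  "Lpath E i = {(nxt E ^^ m) i | m. 1 \<le> m \<and> (nxt E ^^ m) i \<noteq> (nxt E ^^ (m - 1)) i}"

text \<open>The last vertex v_l of the path from i: the path has strictly increasing labels,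
  so its last vertex is the maximum of {v_0,...,v_l}.\<close>

definition path_end :: "nat set set \<Rightarrow> nat \<Rightarrow> nat" where
  "path_end E i = Max (insert i (Lpath E i))"

definition deg' :: "nat set set \<Rightarrow> nat" where
  "deg' E = deg E (path_end E 1)"

definition G :: "nat \<Rightarrow> 'a::comm_semiring_1 \<Rightarrow> 'a \<Rightarrow> 'a \<Rightarrow> 'a" where
  "G n x y z = (\<Sum>t\<in>trees n. x ^ deg t 1 * y ^ deg' t * z ^ card (Lpath t 1))"

end

theory Submission
  imports Defs
begin

definition good :: "nat \<Rightarrow> nat set set \<Rightarrow> bool" where
  "good n E \<longleftrightarrow> 1 \<le> n \<and> (\<forall>e\<in>E. e \<subseteq> {1..n} \<and> card e = 2)"

definition pth :: "nat set set \<Rightarrow> nat \<Rightarrow> nat" where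
  "pth E m = (nxt E ^^ m) 1"

definition plen :: "nat set set \<Rightarrow> nat" where
  "plen E = (LEAST m. nxt E (pth E m) = pth E m)"

lemma pth_Suc: "pth E (Suc m) = nxt E (pth E m)"
  by (simp add: pth_def)

lemma pth_0: "pth E 0 = 1"
  by (simp add: pth_def)

lemma good_edge: "good n E \<Longrightarrow> {a, b} \<in> E \<Longrightarrow> a \<in> {1..n} \<and> b \<in> {1..n} \<and> a \<noteq> b"
proof -
  assume g: "good n E" and e: "{a, b} \<in> E"
  then have "{a, b} \<subseteq> {1..n}" "card {a, b} = 2" unfolding good_def by auto
  then show ?thesis by (cases "a = b") auto
qed

lemma larger_fin: "good n E \<Longrightarrow> finite (larger_nbrs E v)"
proof -
  assume g: "good n E"
  have "larger_nbrs E v \<subseteq> {1..n}" unfolding larger_nbrs_def using good_edge[OF g] by auto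
  then show ?thesis using finite_subset by blast
qed

lemma nxt_ge: "good n E \<Longrightarrow> v \<le> nxt E v"
proof -
  assume g: "good n E"
  show ?thesis
  proof (cases "larger_nbrs E v = {}")
    case True then show ?thesis by (simp add: nxt_def)
  next
    case False
    then have "Min (larger_nbrs E v) \<in> larger_nbrs E v" using Min_in larger_fin[OF g] by blast
    then show ?thesis using False by (simp add: nxt_def larger_nbrs_def)
  qed
qed

lemma nxt_in: "good n E \<Longrightarrow> larger_nbrs E v \<noteq> {} \<Longrightarrow> nxt E v \<in> larger_nbrs E v \<and> (\<forall>u\<in>larger_nbrs E v. nxt E v \<le> u)"
  using Min_in Min_le larger_fin by (simp add: nxt_def)

lemma nxt_range: "good n E \<Longrightarrow> v \<in> {1..n} \<Longrightarrow> nxt E v \<in> {1..n}"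
proof -
  assume g: "good n E" and v: "v \<in> {1..n}"
  show ?thesis
  proof (cases "larger_nbrs E v = {}")
    case True then show ?thesis using v by (simp add: nxt_def)
  next
    case False
    then have "nxt E v \<in> larger_nbrs E v" using nxt_in[OF g] by blast
    then show ?thesis using good_edge[OF g] unfolding larger_nbrs_def by blast
  qed
qed

lemma pth_range: "good n E \<Longrightarrow> pth E m \<in> {1..n}"
proof (induction m)
  case 0 then show ?case by (simp add: pth_0 good_def)
next
  case (Suc m) then show ?case using nxt_range by (simp add: pth_Suc)
qed

lemma pth_exists: "good n E \<Longrightarrow> \<exists>m. nxt E (pth E m) = pth E m"
proof (rule ccontr)
  assume g: "good n E" and c: "\<not> (\<exists>m. nxt E (pth E m) = pth E m)"
  have "\<forall>m. m + 1 \<le> pth E m"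
  proof
    fix m show "m + 1 \<le> pth E m"
    proof (induction m)
      case 0 then show ?case by (simp add: pth_0)
    next
      case (Suc m)
      have "pth E m \<le> nxt E (pth E m)" using nxt_ge[OF g] .
      moreover have "nxt E (pth E m) \<noteq> pth E m" using c by blast
      ultimately show ?case using Suc by (simp add: pth_Suc)
    qed
  qed
  then have "n + 1 \<le> pth E n" by blast
  moreover have "pth E n \<le> n" using pth_range[OF g] by auto
  ultimately show False by simp
qed

lemma plen_fix: "good n E \<Longrightarrow> nxt E (pth E (plen E)) = pth E (plen E)"
proof -
  assume g: "good n E"
  show ?thesis using pth_exists[OF g] unfolding plen_def by (rule LeastI_ex)
qed

lemma plen_lt: "good n E \<Longrightarrow> m < plen E \<Longrightarrow> pth E m < pth E (Suc m)"
proof -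
  assume g: "good n E" and m: "m < plen E"
  have "nxt E (pth E m) \<noteq> pth E m" using m not_less_Least unfolding plen_def by blast
  then show ?thesis using nxt_ge[OF g, of "pth E m"] by (simp add: pth_Suc)
qed

lemma plen_after: "good n E \<Longrightarrow> plen E \<le> m \<Longrightarrow> pth E m = pth E (plen E)"
proof (induction m)
  case 0 then show ?case by simp
next
  case (Suc m)
  show ?case
  proof (cases "plen E = Suc m")
    case True then show ?thesis by simp
  next
    case False
    then have "plen E \<le> m" using Suc by simp
    then show ?thesis using Suc plen_fix by (simp add: pth_Suc)
  qed
qed

lemma plen_empty: "good n E \<Longrightarrow> larger_nbrs E (pth E (plen E)) = {}"
  using plen_fix nxt_in unfolding larger_nbrs_def by fastforce

lemma plen_step: "good n E \<Longrightarrow> m < plen E \<Longrightarrow>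
   pth E (Suc m) \<in> larger_nbrs E (pth E m) \<and> (\<forall>u\<in>larger_nbrs E (pth E m). pth E (Suc m) \<le> u)"
proof -
  assume g: "good n E" and m: "m < plen E"
  have "larger_nbrs E (pth E m) \<noteq> {}"
    using plen_lt[OF g m] by (auto simp: pth_Suc nxt_def)
  then show ?thesis using nxt_in[OF g] by (simp add: pth_Suc)
qed

lemma pth_mono: "good n E \<Longrightarrow> i < j \<Longrightarrow> j \<le> plen E \<Longrightarrow> pth E i < pth E j"
proof (induction j)
  case 0 then show ?case by simp
next
  case (Suc j)
  have "pth E j < pth E (Suc j)" using plen_lt Suc by simp
  then show ?case using Suc by (cases "i = j") auto
qed

lemma Lpath_eq: "good n E \<Longrightarrow> Lpath E 1 = pth E ` {1..plen E}"
proof -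
  assume g: "good n E"
  have "Lpath E 1 = {pth E m | m. 1 \<le> m \<and> pth E m \<noteq> pth E (m - 1)}"
    by (simp add: Lpath_def pth_def)
  also have "\<dots> = pth E ` {1..plen E}"
  proof (intro set_eqI iffI)
    fix x assume "x \<in> {pth E m | m. 1 \<le> m \<and> pth E m \<noteq> pth E (m - 1)}"
    then obtain m where m: "x = pth E m" "1 \<le> m" "pth E m \<noteq> pth E (m - 1)" by blast
    have "m \<le> plen E"
    proof (rule ccontr)
      assume "\<not> m \<le> plen E"
      then have "pth E m = pth E (plen E)" "pth E (m - 1) = pth E (plen E)"
        using plen_after[OF g, of m] plen_after[OF g, of "m - 1"] by auto
      then show False using m by simp
    qed
    then show "x \<in> pth E ` {1..plen E}" using m by auto
  next
    fix x assume "x \<in> pth E ` {1..plen E}"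
    then obtain m where m: "x = pth E m" "1 \<le> m" "m \<le> plen E" by auto
    have "pth E (m - 1) < pth E m" using pth_mono[OF g, of "m - 1" m] m by simp
    then show "x \<in> {pth E m | m. 1 \<le> m \<and> pth E m \<noteq> pth E (m - 1)}" using m by force
  qed
  finally show ?thesis .
qed

lemma card_Lpath: "good n E \<Longrightarrow> card (Lpath E 1) = plen E"
proof -
  assume g: "good n E"
  have "inj_on (pth E) {1..plen E}"
    by (intro inj_onI) (metis atLeastAtMost_iff linorder_neqE_nat order_less_irrefl pth_mono[OF g])
  then show ?thesis using Lpath_eq[OF g] by (simp add: card_image)
qed

lemma path_end_eq: "good n E \<Longrightarrow> path_end E 1 = pth E (plen E)"
proof -
  assume g: "good n E"
  have "Max (insert 1 (pth E ` {1..plen E})) = pth E (plen E)"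
  proof (rule Max_eqI)
    show "finite (insert 1 (pth E ` {1..plen E}))" by simp
  next
    fix y
    have le: "pth E m \<le> pth E (plen E)" if "m \<le> plen E" for m
      using pth_mono[OF g, of m "plen E"] that by (cases "m = plen E") auto
    assume "y \<in> insert 1 (pth E ` {1..plen E})"
    then show "y \<le> pth E (plen E)"
      using le[of 0] le by (auto simp: pth_0)
  next
    show "pth E (plen E) \<in> insert 1 (pth E ` {1..plen E})"
      by (cases "plen E = 0") (auto simp: pth_0)
  qed
  then show ?thesis using Lpath_eq[OF g] by (simp add: path_end_def)
qed


definition qq :: "nat \<Rightarrow> nat set set \<Rightarrow> nat \<Rightarrow> nat" where
  "qq n E j = (if j \<le> plen E then pth E j else Suc n)"

definition blk :: "nat \<Rightarrow> nat set set \<Rightarrow> nat \<Rightarrow> nat" where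
  "blk n E u = Max {j. j \<le> plen E \<and> qq n E j \<le> u}"

definition sig :: "nat \<Rightarrow> nat set set \<Rightarrow> nat \<Rightarrow> nat" where
  "sig n E u = n + 2 + u - qq n E (blk n E u) - qq n E (Suc (blk n E u))"

definition phi :: "nat \<Rightarrow> nat set set \<Rightarrow> nat set set" where
  "phi n E = (`) (sig n E) ` E"

definition wv :: "nat \<Rightarrow> nat set set \<Rightarrow> nat \<Rightarrow> nat" where
  "wv n E k = n + 2 - qq n E (Suc (plen E) - k)"

context
  fixes n E
  assumes g: "good n E"
begin

lemma qq_mono: "i < j \<Longrightarrow> j \<le> Suc (plen E) \<Longrightarrow> qq n E i < qq n E j"
proof -
  assume ij: "i < j" and j: "j \<le> Suc (plen E)"
  show ?thesis
  proof (cases "j \<le> plen E")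
    case True then show ?thesis using ij pth_mono[OF g] by (simp add: qq_def)
  next
    case False
    then have "pth E i \<le> n" using pth_range[OF g] by auto
    then show ?thesis using False ij j by (simp add: qq_def)
  qed
qed

lemma qq_mono_le: "i \<le> j \<Longrightarrow> j \<le> Suc (plen E) \<Longrightarrow> qq n E i \<le> qq n E j"
  using qq_mono by (cases "i = j") (auto simp: less_imp_le)

lemma qq_0: "qq n E 0 = 1" by (simp add: qq_def pth_0)
lemma qq_last: "qq n E (Suc (plen E)) = Suc n" by (simp add: qq_def)
lemma qq_pth: "j \<le> plen E \<Longrightarrow> qq n E j = pth E j" by (simp add: qq_def)

lemma blk_props: "u \<in> {1..n} \<Longrightarrow>
   blk n E u \<le> plen E \<and> qq n E (blk n E u) \<le> u \<and> u < qq n E (Suc (blk n E u))"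
proof -
  assume u: "u \<in> {1..n}"
  let ?S = "{j. j \<le> plen E \<and> qq n E j \<le> u}"
  have fin: "finite ?S" by simp
  have ne: "0 \<in> ?S" using u by (simp add: qq_0)
  have in_S: "blk n E u \<in> ?S" unfolding blk_def using Max_in[OF fin] ne by blast
  have mx: "\<And>j. j \<in> ?S \<Longrightarrow> j \<le> blk n E u" unfolding blk_def using Max_ge[OF fin] by blast
  show ?thesis
  proof (cases "blk n E u = plen E")
    case True then show ?thesis using in_S u by (simp add: qq_last)
  next
    case False
    then have "Suc (blk n E u) \<le> plen E" using in_S by simp
    then have "\<not> qq n E (Suc (blk n E u)) \<le> u" using mx by fastforce
    then show ?thesis using in_S by simp
  qed
qed

lemma blk_unique: "j \<le> plen E \<Longrightarrow> qq n E j \<le> u \<Longrightarrow> u < qq n E (Suc j) \<Longrightarrow> u \<in> {1..n} \<Longrightarrow> blk n E u = j"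
proof -
  assume j: "j \<le> plen E" and a: "qq n E j \<le> u" and b: "u < qq n E (Suc j)" and u: "u \<in> {1..n}"
  note bp = blk_props[OF u]
  show ?thesis
  proof (rule ccontr)
    assume "blk n E u \<noteq> j"
    then consider "blk n E u < j" | "j < blk n E u" by linarith
    then show False
    proof cases
      case 1
      then have "qq n E (Suc (blk n E u)) \<le> qq n E j" using qq_mono_le j by simp
      then show False using bp a by linarith
    next
      case 2
      then have "qq n E (Suc j) \<le> qq n E (blk n E u)" using qq_mono_le bp by simp
      then show False using bp b by linarith
    qed
  qed
qed

lemma wv_eq: "j \<le> plen E \<Longrightarrow> wv n E (plen E - j) = n + 2 - qq n E (Suc j)"
  by (simp add: wv_def Suc_diff_le)

lemma qq_le: "j \<le> Suc (plen E) \<Longrightarrow> 1 \<le> qq n E j \<and> qq n E j \<le> Suc n"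
  using qq_mono_le[of 0 j] qq_mono_le[of j "Suc (plen E)"] by (simp add: qq_0 qq_last)

lemma sig_eq: "u \<in> {1..n} \<Longrightarrow> sig n E u = n + 2 - qq n E (Suc (blk n E u)) + (u - qq n E (blk n E u))"
proof -
  assume u: "u \<in> {1..n}"
  note bp = blk_props[OF u]
  have "qq n E (Suc (blk n E u)) \<le> Suc n" using qq_le bp by simp
  then show ?thesis using bp unfolding sig_def by linarith
qed

lemma sig_range: "u \<in> {1..n} \<Longrightarrow> sig n E u \<in> {1..n}"
proof -
  assume u: "u \<in> {1..n}"
  note bp = blk_props[OF u]
  have "qq n E (Suc (blk n E u)) \<le> Suc n" "1 \<le> qq n E (blk n E u)" using qq_le bp by auto
  then show ?thesis using bp sig_eq[OF u] by auto
qed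

lemma sig_pth: "j \<le> plen E \<Longrightarrow> sig n E (pth E j) = n + 2 - qq n E (Suc j)"
proof -
  assume j: "j \<le> plen E"
  have r: "pth E j \<in> {1..n}" using pth_range[OF g] .
  have "pth E j < qq n E (Suc j)" using qq_mono[of j "Suc j"] j qq_pth[OF j] by simp
  then have "blk n E (pth E j) = j" using blk_unique[OF j _ _ r] qq_pth[OF j] by simp
  then show ?thesis using sig_eq[OF r] qq_pth[OF j] by simp
qed

lemma sig_ge: "u \<in> {1..n} \<Longrightarrow> n + 2 - qq n E (Suc (blk n E u)) \<le> sig n E u"
  using sig_eq by simp

lemma sig_lt: "u \<in> {1..n} \<Longrightarrow> sig n E u < n + 2 - qq n E (blk n E u)"
proof -
  assume u: "u \<in> {1..n}"
  note bp = blk_props[OF u]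
  have "qq n E (Suc (blk n E u)) \<le> Suc n" using qq_le bp by simp
  then show ?thesis using bp sig_eq[OF u] by linarith
qed

lemma sig_blk_lt: "u \<in> {1..n} \<Longrightarrow> w \<in> {1..n} \<Longrightarrow> blk n E u < blk n E w \<Longrightarrow> sig n E w < sig n E u"
proof -
  assume u: "u \<in> {1..n}" and w: "w \<in> {1..n}" and lt: "blk n E u < blk n E w"
  have "qq n E (Suc (blk n E u)) \<le> qq n E (blk n E w)" using qq_mono_le lt blk_props[OF w] by simp
  moreover have "qq n E (blk n E w) \<le> Suc n" using qq_le blk_props[OF w] by simp
  ultimately show ?thesis using sig_lt[OF w] sig_ge[OF u] by linarith
qed

lemma sig_blk_eq: "u \<in> {1..n} \<Longrightarrow> w \<in> {1..n} \<Longrightarrow> blk n E u = blk n E w \<Longrightarrow>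
   int (sig n E w) - int (sig n E u) = int w - int u"
proof -
  assume u: "u \<in> {1..n}" and w: "w \<in> {1..n}" and b: "blk n E u = blk n E w"
  have "qq n E (blk n E w) \<le> u" "qq n E (blk n E w) \<le> w" using blk_props[OF u] blk_props[OF w] b by auto
  then show ?thesis using sig_eq[OF u] sig_eq[OF w] b by arith
qed

lemma sig_inj: "inj_on (sig n E) {1..n}"
proof (intro inj_onI)
  fix u w assume u: "u \<in> {1..n}" and w: "w \<in> {1..n}" and e: "sig n E u = sig n E w"
  have "blk n E u = blk n E w"
    using sig_blk_lt[OF u w] sig_blk_lt[OF w u] e by (metis less_irrefl linorder_neqE_nat)
  then show "u = w" using sig_blk_eq[OF u w] e by simp
qed

end


lemma path_char:
  assumes g: "good n F" and q0: "q 0 = 1"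
    and st: "\<And>m. m < l \<Longrightarrow> q (Suc m) \<in> larger_nbrs F (q m) \<and> (\<forall>u\<in>larger_nbrs F (q m). q (Suc m) \<le> u)"
    and en: "larger_nbrs F (q l) = {}"
    and mono: "\<And>m. m < l \<Longrightarrow> q m < q (Suc m)"
  shows "(\<forall>m. pth F m = q (min m l)) \<and> plen F = l"
proof -
  have nx: "nxt F (q m) = q (Suc m)" if "m < l" for m
  proof -
    have ne: "larger_nbrs F (q m) \<noteq> {}" using st[OF that] by blast
    have "Min (larger_nbrs F (q m)) = q (Suc m)"
      using st[OF that] larger_fin[OF g] by (intro Min_eqI) auto
    then show ?thesis using ne by (simp add: nxt_def)
  qed
  have nl: "nxt F (q l) = q l" using en by (simp add: nxt_def)
  have p: "pth F m = q (min m l)" for m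
  proof (induction m)
    case 0 then show ?case by (simp add: pth_0 q0)
  next
    case (Suc m)
    show ?case
    proof (cases "m < l")
      case True then show ?thesis using Suc nx by (simp add: pth_Suc)
    next
      case False then show ?thesis using Suc nl by (simp add: pth_Suc min_def)
    qed
  qed
  have "plen F = l" unfolding plen_def
  proof (rule Least_equality)
    show "nxt F (pth F l) = pth F l" using p nl by simp
  next
    fix m assume "nxt F (pth F m) = pth F m"
    then show "l \<le> m" using p nx mono by (metis min.absorb1 not_le_imp_less order_less_irrefl less_imp_le)
  qed
  then show ?thesis using p by blast
qed

lemma card2_eq: "card e = 2 \<Longrightarrow> x \<in> e \<Longrightarrow> y \<in> e \<Longrightarrow> x \<noteq> y \<Longrightarrow> e = {x, y}"
  by (auto simp: card_2_iff)

context
  fixes n E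
  assumes g: "good n E"
begin

lemma edge_sub: "e \<in> E \<Longrightarrow> e \<subseteq> {1..n}" using g by (simp add: good_def)

lemma phi_good: "good n (phi n E)"
proof -
  have "e' \<subseteq> {1..n} \<and> card e' = 2" if e': "e' \<in> phi n E" for e'
  proof -
    obtain e where e: "e \<in> E" "e' = sig n E ` e" using e' unfolding phi_def by blast
    have "inj_on (sig n E) e" using inj_on_subset[OF sig_inj[OF g] edge_sub[OF e(1)]] .
    then have "card e' = 2" using e g by (simp add: card_image good_def)
    moreover have "e' \<subseteq> {1..n}" using e edge_sub sig_range[OF g] by blast
    ultimately show ?thesis by simp
  qed
  then show ?thesis using g by (simp add: good_def)
qed

lemma phi_edge: "{x, y} \<in> E \<Longrightarrow> {sig n E x, sig n E y} \<in> phi n E"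
  unfolding phi_def by (metis image_empty image_eqI image_insert)

lemma phi_nbr: "x \<in> {1..n} \<Longrightarrow> {sig n E x, b} \<in> phi n E \<Longrightarrow> \<exists>y. b = sig n E y \<and> {x, y} \<in> E"
proof -
  assume x: "x \<in> {1..n}" and b: "{sig n E x, b} \<in> phi n E"
  then obtain e where e: "e \<in> E" "{sig n E x, b} = sig n E ` e" unfolding phi_def by blast
  have sub: "e \<subseteq> {1..n}" using edge_sub[OF e(1)] .
  have c2: "card e = 2" using g e(1) by (simp add: good_def)
  have inj: "inj_on (sig n E) {1..n}" using sig_inj[OF g] .
  obtain a where a: "a \<in> e" "sig n E a = sig n E x" using e(2) by (metis imageE insertI1)
  have ax: "a = x" using inj a sub x by (meson inj_onD subsetD)
  obtain y where y: "y \<in> e" "b = sig n E y" using e(2) by (metis imageE insertI1 insert_commute)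
  have c2': "card (sig n E ` e) = 2" using c2 inj_on_subset[OF inj sub] by (simp add: card_image)
  have "b \<noteq> sig n E x"
  proof
    assume "b = sig n E x"
    then have "sig n E ` e = {sig n E x}" using e(2) by simp
    then show False using c2' by simp
  qed
  then have "y \<noteq> x" using y by auto
  then have "e = {x, y}" using card2_eq[OF c2] a ax y by blast
  then show ?thesis using y e by blast
qed

lemma key: "j \<le> plen E \<Longrightarrow> {pth E j, y} \<in> E \<Longrightarrow> sig n E (pth E j) < sig n E y \<Longrightarrow> blk n E y < j"
proof -
  assume j: "j \<le> plen E" and e: "{pth E j, y} \<in> E" and lt: "sig n E (pth E j) < sig n E y"
  have y: "y \<in> {1..n}" using good_edge[OF g e] by blast
  have pj: "pth E j \<in> {1..n}" using pth_range[OF g] .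
  have bj: "blk n E (pth E j) = j"
    using blk_unique[OF g j, of "pth E j"] qq_pth[OF g j] qq_mono[OF g, of j "Suc j"] j pj by simp
  show ?thesis
  proof (rule ccontr)
    assume "\<not> blk n E y < j"
    then consider "blk n E y = j" | "j < blk n E y" by linarith
    then show False
    proof cases
      case 2 then show False using sig_blk_lt[OF g pj y] bj lt by simp
    next
      case 1
      have "int (sig n E y) - int (sig n E (pth E j)) = int y - int (pth E j)"
        using sig_blk_eq[OF g pj y] bj 1 by simp
      then have yg: "pth E j < y" using lt by linarith
      then have yl: "y \<in> larger_nbrs E (pth E j)" using e by (simp add: larger_nbrs_def)
      have yu: "y < qq n E (Suc j)" using blk_props[OF g y] 1 by simp
      show False
      proof (cases "j < plen E")
        case True
        then have "pth E (Suc j) \<le> y" using plen_step[OF g True] yl by blast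
        then show False using yu qq_pth[OF g, of "Suc j"] True by simp
      next
        case False
        then have "j = plen E" using j by simp
        then show False using plen_empty[OF g] yl by simp
      qed
    qed
  qed
qed

lemma wv_sig: "k \<le> plen E \<Longrightarrow> wv n E k = sig n E (pth E (plen E - k))"
  using sig_pth[OF g, of "plen E - k"] by (simp add: wv_def Suc_diff_le)

lemma wv_0: "wv n E 0 = 1" using qq_last[OF g] by (simp add: wv_def)

lemma phi_path: "(\<forall>m. pth (phi n E) m = wv n E (min m (plen E))) \<and> plen (phi n E) = plen E"
proof -
  have ab: "qq n E (Suc (plen E) - Suc m) < qq n E (Suc (plen E) - m) \<and> qq n E (Suc (plen E) - m) \<le> Suc n"
    if m: "m < plen E" for m
    using qq_mono[OF g] qq_le[OF g] m by simp
  have mono: "wv n E m < wv n E (Suc m)" if m: "m < plen E" for m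
    using ab[OF m] unfolding wv_def by simp linarith
  have st: "wv n E (Suc m) \<in> larger_nbrs (phi n E) (wv n E m) \<and>
        (\<forall>u\<in>larger_nbrs (phi n E) (wv n E m). wv n E (Suc m) \<le> u)" if m: "m < plen E" for m
  proof -
  define j where "j = plen E - m"
  have j: "1 \<le> j" "j \<le> plen E" using m by (auto simp: j_def)
  have wm: "wv n E m = sig n E (pth E j)" using wv_sig m by (simp add: j_def)
  have ws: "wv n E (Suc m) = sig n E (pth E (j - 1))" using wv_sig m by (simp add: j_def)
  have st: "pth E j \<in> larger_nbrs E (pth E (j - 1))" using plen_step[OF g, of "j - 1"] j by simp
  then have "{pth E (j - 1), pth E j} \<in> E" by (simp add: larger_nbrs_def)
  then have ed: "{wv n E m, wv n E (Suc m)} \<in> phi n E" using phi_edge wm ws by (simp add: insert_commute)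
  show ?thesis
  proof (intro conjI ballI)
    show "wv n E (Suc m) \<in> larger_nbrs (phi n E) (wv n E m)"
      using ed mono[OF m] by (simp add: larger_nbrs_def)
  next
    fix u assume "u \<in> larger_nbrs (phi n E) (wv n E m)"
    then have u: "{sig n E (pth E j), u} \<in> phi n E" "sig n E (pth E j) < u"
      using wm by (auto simp: larger_nbrs_def)
    obtain y where y: "u = sig n E y" "{pth E j, y} \<in> E"
      using phi_nbr[OF pth_range[OF g] u(1)] by blast
    have yr: "y \<in> {1..n}" using good_edge[OF g y(2)] by blast
    have "blk n E y < j" using key[OF j(2) y(2)] u y by simp
    then have "qq n E (Suc (blk n E y)) \<le> qq n E j" using qq_mono_le[OF g] j by simp
    then have "n + 2 - qq n E j \<le> sig n E y" using sig_ge[OF g yr] by linarith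
    moreover have "wv n E (Suc m) = n + 2 - qq n E j" using m by (simp add: wv_def j_def Suc_diff_Suc)
    ultimately show "wv n E (Suc m) \<le> u" using y by simp
  qed
  qed
  have en: "larger_nbrs (phi n E) (wv n E (plen E)) = {}"
  proof (rule ccontr)
    assume "larger_nbrs (phi n E) (wv n E (plen E)) \<noteq> {}"
    then obtain u where "u \<in> larger_nbrs (phi n E) (wv n E (plen E))" by blast
    then have u: "{sig n E (pth E 0), u} \<in> phi n E" "sig n E (pth E 0) < u"
      using wv_sig[of "plen E"] by (auto simp: larger_nbrs_def)
    obtain y where y: "u = sig n E y" "{pth E 0, y} \<in> E"
      using phi_nbr[OF pth_range[OF g] u(1)] by blast
    show False using key[of 0 y] y u by simp
  qed
  show ?thesis by (rule path_char[OF phi_good wv_0 st en mono])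
qed

lemma qq_phi: "k \<le> Suc (plen E) \<Longrightarrow> qq n (phi n E) k = wv n E k"
proof (cases "k \<le> plen E")
  case True then show ?thesis using phi_path by (simp add: qq_def)
next
  case False
  assume "k \<le> Suc (plen E)"
  then have "k = Suc (plen E)" using False by simp
  then show ?thesis using phi_path by (simp add: qq_def wv_def pth_0)
qed

lemma sig_invol: "u \<in> {1..n} \<Longrightarrow> sig n (phi n E) (sig n E u) = u"
proof -
  assume u: "u \<in> {1..n}"
  define j where "j = blk n E u"
  define l where "l = plen E"
  have bp: "j \<le> l" "qq n E j \<le> u" "u < qq n E (Suc j)" using blk_props[OF g u] by (auto simp: j_def l_def)
  have q1: "qq n E (Suc j) \<le> Suc n" "1 \<le> qq n E j" using qq_le[OF g] bp by (auto simp: l_def)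
  have pl: "plen (phi n E) = l" using phi_path by (simp add: l_def)
  have a: "qq n (phi n E) (l - j) = n + 2 - qq n E (Suc j)"
    using qq_phi[of "l - j"] bp by (simp add: wv_def l_def Suc_diff_le)
  have b: "qq n (phi n E) (Suc (l - j)) = n + 2 - qq n E j"
    using qq_phi[of "Suc (l - j)"] bp by (simp add: wv_def l_def Suc_diff_le)
  have s: "sig n E u = n + 2 + u - qq n E j - qq n E (Suc j)" by (simp add: sig_def j_def)
  have sr: "sig n E u \<in> {1..n}" using sig_range[OF g u] .
  have bl: "blk n (phi n E) (sig n E u) = l - j"
    using blk_unique[OF phi_good, of "l - j" "sig n E u"] pl a b s bp q1 sr by simp
  show ?thesis unfolding sig_def[of n "phi n E"] bl a b using s bp q1 by simp
qed

lemma phi_phi: "phi n (phi n E) = E"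
proof -
  have "(`) (sig n (phi n E)) ` (`) (sig n E) ` E = E"
  proof -
    have "sig n (phi n E) ` sig n E ` e = e" if "e \<in> E" for e
    proof -
      have "sig n (phi n E) ` sig n E ` e = (sig n (phi n E) \<circ> sig n E) ` e" by (simp add: image_comp)
      also have "\<dots> = id ` e" using edge_sub[OF that] sig_invol by (intro image_cong) auto
      finally show ?thesis by simp
    qed
    then show ?thesis by (simp add: image_image)
  qed
  then show ?thesis by (simp add: phi_def)
qed

lemma deg_phi: "x \<in> {1..n} \<Longrightarrow> deg (phi n E) (sig n E x) = deg E x"
proof -
  assume x: "x \<in> {1..n}"
  have inj: "inj_on (sig n E) {1..n}" using sig_inj[OF g] .
  have "{e' \<in> phi n E. sig n E x \<in> e'} = (`) (sig n E) ` {e \<in> E. x \<in> e}"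
  proof -
    have "sig n E x \<in> sig n E ` e \<longleftrightarrow> x \<in> e" if "e \<in> E" for e
      using inj x edge_sub[OF that] by (auto dest: inj_onD)
    then show ?thesis unfolding phi_def by blast
  qed
  moreover have "inj_on ((`) (sig n E)) {e \<in> E. x \<in> e}"
  proof (rule inj_onI)
    fix a b assume a: "a \<in> {e \<in> E. x \<in> e}" and b: "b \<in> {e \<in> E. x \<in> e}" and e: "sig n E ` a = sig n E ` b"
    have "a \<subseteq> {1..n}" "b \<subseteq> {1..n}" using a b edge_sub by auto
    then show "a = b" using inj e by (metis inj_on_image_eq_iff)
  qed
  ultimately show ?thesis by (simp add: deg_def card_image)
qed

lemma stats: "deg (phi n E) 1 = deg' E \<and> deg' (phi n E) = deg E 1 \<and> card (Lpath (phi n E) 1) = card (Lpath E 1)"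
proof (intro conjI)
  have e1: "1 = sig n E (pth E (plen E))" using wv_sig[of 0] wv_0 by simp
  show "deg (phi n E) 1 = deg' E"
    using deg_phi[OF pth_range[OF g]] e1 path_end_eq[OF g] by (simp add: deg'_def)
  have "path_end (phi n E) 1 = wv n E (plen E)" using path_end_eq[OF phi_good] phi_path by simp
  also have "\<dots> = sig n E 1" using wv_sig[of "plen E"] by (simp add: pth_0)
  finally show "deg' (phi n E) = deg E 1" using deg_phi[of 1] g by (simp add: deg'_def good_def)
  show "card (Lpath (phi n E) 1) = card (Lpath E 1)"
    using card_Lpath[OF g] card_Lpath[OF phi_good] phi_path by simp
qed

end


lemma tree_good: "is_tree {1..n} E \<Longrightarrow> 1 \<le> n \<Longrightarrow> good n E"
  by (simp add: is_tree_def good_def)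

lemma adj_map: "(a, b) \<in> (adj F)\<^sup>* \<Longrightarrow> (f a, f b) \<in> (adj ((`) f ` F))\<^sup>*"
proof (induction rule: rtrancl_induct)
  case base then show ?case by simp
next
  case (step b c)
  then have "{b, c} \<in> F" by (simp add: adj_def)
  then have "{f b, f c} \<in> (`) f ` F" by (metis image_empty image_eqI image_insert)
  then have "(f b, f c) \<in> adj ((`) f ` F)" by (simp add: adj_def)
  then show ?case using step by (meson rtrancl.rtrancl_into_rtrancl)
qed

lemma phi_tree:
  assumes t: "is_tree {1..n} E" and n: "1 \<le> n"
  shows "is_tree {1..n} (phi n E)"
proof -
  have g: "good n E" using tree_good[OF t n] .
  let ?f = "sig n E" and ?h = "sig n (phi n E)"
  have g': "good n (phi n E)" using phi_good[OF g] .
  have hf: "\<And>u. u \<in> {1..n} \<Longrightarrow> ?h (?f u) = u" using sig_invol[OF g] .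
  have fh: "\<And>u. u \<in> {1..n} \<Longrightarrow> ?f (?h u) = u" using sig_invol[OF g'] phi_phi[OF g] by simp
  have hr: "\<And>u. u \<in> {1..n} \<Longrightarrow> ?h u \<in> {1..n}" using sig_range[OF g'] .
  have e1: "\<forall>e\<in>phi n E. e \<subseteq> {1..n} \<and> card e = 2" using g' by (simp add: good_def)
  have e2: "\<forall>u\<in>{1..n}. \<forall>v\<in>{1..n}. (u, v) \<in> (adj (phi n E))\<^sup>*"
  proof (intro ballI)
    fix a b assume a: "a \<in> {1..n}" and b: "b \<in> {1..n}"
    have "(?h a, ?h b) \<in> (adj E)\<^sup>*" using t hr[OF a] hr[OF b] by (simp add: is_tree_def)
    then have "(?f (?h a), ?f (?h b)) \<in> (adj (phi n E))\<^sup>*" using adj_map unfolding phi_def by fast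
    then show "(a, b) \<in> (adj (phi n E))\<^sup>*" using fh a b by simp
  qed
  have e3: "\<forall>e\<in>phi n E. \<forall>u v. e = {u, v} \<longrightarrow> (u, v) \<notin> (adj (phi n E - {e}))\<^sup>*"
  proof (intro ballI allI impI notI)
    fix e a b assume e: "e \<in> phi n E" and ab: "e = {a, b}" and c: "(a, b) \<in> (adj (phi n E - {e}))\<^sup>*"
    have sub: "\<And>e. e \<in> phi n E \<Longrightarrow> e \<subseteq> {1..n}" using e1 by blast
    have inj: "inj_on ?h {1..n}" using sig_inj[OF g'] .
    have injI: "inj_on ((`) ?h) (phi n E)"
      by (rule inj_onI) (metis inj sub inj_on_image_eq_iff)
    have im: "(`) ?h ` phi n E = E" using phi_phi[OF g] by (simp add: phi_def)
    have "(`) ?h ` (phi n E - {e}) = (`) ?h ` phi n E - (`) ?h ` {e}"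
      using inj_on_image_set_diff[OF injI] e by blast
    then have d: "(`) ?h ` (phi n E - {e}) = E - {?h ` e}" using im by simp
    have "(?h a, ?h b) \<in> (adj (E - {?h ` e}))\<^sup>*" using adj_map[OF c, of ?h] d by simp
    moreover have "?h ` e \<in> E" using im e by blast
    moreover have "?h ` e = {?h a, ?h b}" using ab by simp
    ultimately show False using t unfolding is_tree_def by blast
  qed
  show ?thesis unfolding is_tree_def using e1 e2 e3 by blast
qed

theorem proposition4p1:
  fixes x y z :: "'a::comm_semiring_1"
  assumes "n \<ge> 2"
  shows "G n x y z = G n y x z"
proof -
  have n: "1 \<le> n" using assms by simp
  have tr: "\<And>t. t \<in> trees n \<Longrightarrow> good n t" using tree_good n by (simp add: trees_def)
  have "(\<Sum>t\<in>trees n. y ^ deg t 1 * x ^ deg' t * z ^ card (Lpath t 1)) =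
        (\<Sum>t\<in>trees n. x ^ deg t 1 * y ^ deg' t * z ^ card (Lpath t 1))"
  proof (rule sum.reindex_bij_witness[of _ "phi n" "phi n"])
    fix t assume "t \<in> trees n"
    then show "phi n (phi n t) = t" using phi_phi tr by blast
  next
    fix t assume "t \<in> trees n"
    then show "phi n t \<in> trees n" using phi_tree n by (simp add: trees_def)
  next
    fix t assume "t \<in> trees n"
    then show "phi n (phi n t) = t" using phi_phi tr by blast
  next
    fix t assume "t \<in> trees n"
    then show "phi n t \<in> trees n" using phi_tree n by (simp add: trees_def)
  next
    fix t assume "t \<in> trees n"
    then have s: "deg (phi n t) 1 = deg' t \<and> deg' (phi n t) = deg t 1 \<and> card (Lpath (phi n t) 1) = card (Lpath t 1)"
      using stats tr by blast
    then show "x ^ deg (phi n t) 1 * y ^ deg' (phi n t) * z ^ card (Lpath (phi n t) 1) =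
               y ^ deg t 1 * x ^ deg' t * z ^ card (Lpath t 1)"
      by (simp add: mult.commute)
  qed
  then show ?thesis by (simp add: G_def)
qed

end
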